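(* Let $m\in\mathbb N\cup\{\infty\}$ and let $$g(\mathbf X)=\sum_{q=1}^m\sum_{\boldsymbol\alpha\in\Gamma_q}\overline{a_{(\boldsymbol\alpha)}}\mathbf X_{\boldsymbol\alpha}^*+a_0I+\sum_{q=1}^m\sum_{\boldsymbol\alpha\in\Gamma_q}a_{(\boldsymbol\alpha)}\mathbf X_{\boldsymbol\alpha},\qquad\mathbf X\in\mathbf B_{\mathbf n}(\mathcal H),$$ be a positive free $k$-pluriharmonic function on the polyball with scalar coefficients. Then for each $q\in\{1,\dots,m\}$, $$\sup_{\boldsymbol\lambda=\{\lambda_{i,j}\}\in\mathbf B_{\mathbf n}(\mathbb C)^-}\Big|\sum_{\boldsymbol\alpha\in\Gamma_q}a_{(\boldsymbol\alpha)}\boldsymbol\lambda_{\boldsymbol\alpha}\Big|\le a_0\cos\frac{\pi}{\left[\frac mq\right]+2}.$$ In particular, $$\sum_{i=1}^k\Big(\sum_{j=1}^{n_i}\Big|\frac{\partial\widetilde g}{\partial z_{i,j}}(0)\Big|^2\Big)^{1/2}\le a_0\cos\frac{\pi}{m+2},$$ where $\widetilde g(\mathbf z)=g(\mathbf z)$ for $\mathbf z=\{z_{i,j}\}\in(\mathbb C^{n_1})_1\times\cdots\times(\mathbb C^{n_k})_1$.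
   Context: Fix $k\in\mathbb N$, $\mathbf n=(n_1,\dots,n_k)\in\mathbb N^k$; Hilbert spaces are separable. The regular polyball $\mathbf B_{\mathbf n}(\mathcal H)$ is the set of $\mathbf X=(X_1,\dots,X_k)$, $X_i=(X_{i,1},\dots,X_{i,n_i})\in B(\mathcal H)^{n_i}$, with entries of $X_s$ commuting with entries of $X_t$ for $s\ne t$, $\|\sum_jX_{i,j}X_{i,j}^*\|<1$ for all $i$, and $\Delta_{\mathbf X}(I)$ positive invertible, where $\Delta_{\mathbf X}=(\mathrm{id}-\Phi_{X_1})\circ\cdots\circ(\mathrm{id}-\Phi_{X_k})$, $\Phi_{X_i}(Y)=\sum_jX_{i,j}YX_{i,j}^*$. For $\mathcal H=\mathbb C$ this is $\mathbf B_{\mathbf n}(\mathbb C)=(\mathbb C^{n_1})_1\times\cdots\times(\mathbb C^{n_k})_1$ (product of open Euclidean unit balls), with closure $\mathbf B_{\mathbf n}(\mathbb C)^-$. $\mathbb F_{n_i}^+$: free semigroup on $g^i_1,\dots,g^i_{n_i}$ with identity $g^i_0$. For $\alpha=g^i_{j_1}\cdots g^i_{j_p}$, $X_{i,\alpha}=X_{i,j_1}\cdots X_{i,j_p}$, $\mathbf X_{\boldsymbol\alpha}=X_{1,\alpha_1}\cdots X_{k,\alpha_k}$ (similarly $\boldsymbol\lambda_{\boldsymbol\alpha}$ for scalars); $\Gamma_q=\{\boldsymbol\alpha:|\alpha_1|+\dots+|\alpha_k|=q\}$. The series defining $g$ converge in norm for every $\mathcal H$ and $\mathbf X\in\mathbf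 B_{\mathbf n}(\mathcal H)$, and positivity means $g(\mathbf X)\ge0$ for all such $\mathcal H,\mathbf X$ (so $a_0\ge0$). $[x]$ is the integer part of $x$; $\cos\frac{\pi}{[m/q]+2}$ and $\cos\frac{\pi}{m+2}$ are read as $1$ when $m=\infty$. *)

theory Defs
  imports "HOL-Analysis.Analysis" "HOL-Library.Extended_Nat"
begin

text \<open>The model separable infinite-dimensional Hilbert space: l2(N) as a set of sequences.
Operators are functions on sequences, only their behaviour on L2 matters.\<close>

type_synonym vec = "nat \<Rightarrow> complex"
type_synonym op = "vec \<Rightarrow> vec"

definition L2 :: "vec set" where
  "L2 = {f. summable (\<lambda>i. (cmod (f i))\<^sup>2)}"

definition inner2 :: "vec \<Rightarrow> vec \<Rightarrow> complex" where
  "inner2 f g = (\<Sum>i. f i * cnj (g i))"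

definition norm2 :: "vec \<Rightarrow> real" where
  "norm2 f = sqrt (\<Sum>i. (cmod (f i))\<^sup>2)"

definition basis2 :: "nat \<Rightarrow> vec" where
  "basis2 j = (\<lambda>i. if i = j then 1 else 0)"

definition bop :: "op \<Rightarrow> bool" where
  "bop T \<longleftrightarrow> (\<forall>f\<in>L2. T f \<in> L2)
     \<and> (\<forall>f\<in>L2. \<forall>g\<in>L2. \<forall>c. T (\<lambda>i. c * f i + g i) = (\<lambda>i. c * T f i + T g i))
     \<and> (\<exists>C. \<forall>f\<in>L2. norm2 (T f) \<le> C * norm2 f)"

definition opnorm :: "op \<Rightarrow> real" where
  "opnorm T = Sup {norm2 (T f) | f. f \<in> L2 \<and> norm2 f \<le> 1}"

text \<open>Adjoint: (T* g)(j) = <g, T e_j>.\<close>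
definition adj :: "op \<Rightarrow> op" where
  "adj T g = (\<lambda>j. \<Sum>i. g i * cnj (T (basis2 j) i))"

definition positive_op :: "op \<Rightarrow> bool" where
  "positive_op T \<longleftrightarrow> (\<forall>h\<in>L2. inner2 (T h) h \<in> \<real> \<and> 0 \<le> Re (inner2 (T h) h))"

definition invertible_op :: "op \<Rightarrow> bool" where
  "invertible_op T \<longleftrightarrow> bop T \<and> (\<exists>S. bop S \<and> (\<forall>h\<in>L2. S (T h) = h \<and> T (S h) = h))"

text \<open>Tuples X: X i j is X_{i+1,j+1} for i < k, j < n i (0-based indices).\<close>

definition Phi :: "nat \<Rightarrow> (nat \<Rightarrow> nat \<Rightarrow> op) \<Rightarrow> nat \<Rightarrow> op \<Rightarrow> op" where
  "Phi n_i X i Y = (\<lambda>h l. \<Sum>j<n_i. X i j (Y (adj (X i j) h)) l)"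

definition Delta :: "nat \<Rightarrow> (nat \<Rightarrow> nat) \<Rightarrow> (nat \<Rightarrow> nat \<Rightarrow> op) \<Rightarrow> op \<Rightarrow> op" where
  "Delta k n X = foldr (\<lambda>i D Y. (\<lambda>h l. D Y h l - Phi (n i) X i (D Y) h l)) [0..<k] (\<lambda>Y. Y)"

definition in_polyball :: "nat \<Rightarrow> (nat \<Rightarrow> nat) \<Rightarrow> (nat \<Rightarrow> nat \<Rightarrow> op) \<Rightarrow> bool" where
  "in_polyball k n X \<longleftrightarrow>
     (\<forall>i<k. \<forall>j<n i. bop (X i j))
   \<and> (\<forall>s<k. \<forall>t<k. s \<noteq> t \<longrightarrow> (\<forall>j<n s. \<forall>l<n t. \<forall>h\<in>L2. X s j (X t l h) = X t l (X s j h)))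
   \<and> (\<forall>i<k. opnorm (\<lambda>h l. \<Sum>j<n i. X i j (adj (X i j) h) l) < 1)
   \<and> positive_op (Delta k n X id) \<and> invertible_op (Delta k n X id)"

text \<open>Multi-indices alpha: alpha i is a word (list of letters < n i) for i < k, empty for i >= k.\<close>
definition Gamma :: "nat \<Rightarrow> (nat \<Rightarrow> nat) \<Rightarrow> nat \<Rightarrow> (nat \<Rightarrow> nat list) set" where
  "Gamma k n q = {\<alpha>. (\<forall>i. k \<le> i \<longrightarrow> \<alpha> i = []) \<and> (\<forall>i<k. set (\<alpha> i) \<subseteq> {..<n i})
                     \<and> (\<Sum>i<k. length (\<alpha> i)) = q}"

definition X_word :: "(nat \<Rightarrow> nat \<Rightarrow> op) \<Rightarrow> nat \<Rightarrow> nat list \<Rightarrow> op" where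
  "X_word X i w = foldr (\<lambda>j T. X i j \<circ> T) w id"

definition X_multi :: "nat \<Rightarrow> (nat \<Rightarrow> nat \<Rightarrow> op) \<Rightarrow> (nat \<Rightarrow> nat list) \<Rightarrow> op" where
  "X_multi k X \<alpha> = foldr (\<lambda>i T. X_word X i (\<alpha> i) \<circ> T) [0..<k] id"

definition lam_multi :: "nat \<Rightarrow> (nat \<Rightarrow> nat \<Rightarrow> complex) \<Rightarrow> (nat \<Rightarrow> nat list) \<Rightarrow> complex" where
  "lam_multi k z \<alpha> = (\<Prod>i<k. prod_list (map (z i) (\<alpha> i)))"

definition P_op :: "nat \<Rightarrow> (nat \<Rightarrow> nat) \<Rightarrow> ((nat \<Rightarrow> nat list) \<Rightarrow> complex) \<Rightarrow> (nat \<Rightarrow> nat \<Rightarrow> op) \<Rightarrow> nat \<Rightarrow> op" where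
  "P_op k n a X q = (\<lambda>h l. \<Sum>\<alpha>\<in>Gamma k n q. a \<alpha> * X_multi k X \<alpha> h l)"

definition series_limit :: "nat \<Rightarrow> (nat \<Rightarrow> nat) \<Rightarrow> ((nat \<Rightarrow> nat list) \<Rightarrow> complex) \<Rightarrow> enat \<Rightarrow> (nat \<Rightarrow> nat \<Rightarrow> op) \<Rightarrow> op \<Rightarrow> bool" where
  "series_limit k n a m X S = (case m of
      enat M \<Rightarrow> (\<forall>h\<in>L2. S h = (\<lambda>l. \<Sum>q\<in>{1..M}. P_op k n a X q h l))
    | \<infinity> \<Rightarrow> (\<lambda>N. opnorm (\<lambda>h l. (\<Sum>q\<in>{1..N}. P_op k n a X q h l) - S h l)) \<longlonglongrightarrow> 0)"

definition g_op :: "real \<Rightarrow> op \<Rightarrow> op" where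
  "g_op a0 S = (\<lambda>h l. adj S h l + of_real a0 * h l + S h l)"

definition cpolyball :: "nat \<Rightarrow> (nat \<Rightarrow> nat) \<Rightarrow> (nat \<Rightarrow> nat \<Rightarrow> complex) set" where
  "cpolyball k n = {z. \<forall>i<k. (\<Sum>j<n i. (cmod (z i j))\<^sup>2) \<le> 1}"

definition g_scalar :: "nat \<Rightarrow> (nat \<Rightarrow> nat) \<Rightarrow> ((nat \<Rightarrow> nat list) \<Rightarrow> complex) \<Rightarrow> real \<Rightarrow> enat \<Rightarrow> (nat \<Rightarrow> nat \<Rightarrow> complex) \<Rightarrow> complex" where
  "g_scalar k n a a0 m z = (let s = (case m of
        enat M \<Rightarrow> (\<Sum>q\<in>{1..M}. \<Sum>\<alpha>\<in>Gamma k n q. a \<alpha> * lam_multi k z \<alpha>)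
      | \<infinity> \<Rightarrow> (\<Sum>q. \<Sum>\<alpha>\<in>Gamma k n (Suc q). a \<alpha> * lam_multi k z \<alpha>))
     in cnj s + of_real a0 + s)"

definition wirtinger :: "(complex \<Rightarrow> complex) \<Rightarrow> complex \<Rightarrow> complex" where
  "wirtinger f w = (vector_derivative (\<lambda>t::real. f (w + of_real t)) (at 0)
                    - \<i> * vector_derivative (\<lambda>t::real. f (w + \<i> * of_real t)) (at 0)) / 2"

definition pderiv_at0 :: "((nat \<Rightarrow> nat \<Rightarrow> complex) \<Rightarrow> complex) \<Rightarrow> nat \<Rightarrow> nat \<Rightarrow> complex" where
  "pderiv_at0 G i j = wirtinger (\<lambda>t. G (\<lambda>i' j'. if i' = i \<and> j' = j then t else 0)) 0"

definition cos_bound :: "enat \<Rightarrow> nat \<Rightarrow> real" where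
  "cos_bound m q = (case m of enat M \<Rightarrow> cos (pi / (real (M div q) + 2)) | \<infinity> \<Rightarrow> 1)"

end

theory Submission
  imports Defs
begin

lemma sum_cis_int:
  fixes L :: nat and r :: int
  assumes L: "L > 0"
  shows "(\<Sum>l<L. cis (2*pi*r*l/L)) = (if (int L) dvd r then of_nat L else 0)"
proof -
  define w where "w = cis (2*pi*r/L)"
  have terms: "cis (2*pi*r*l/L) = w ^ l" for l :: nat
  proof -
    have "w ^ l = cis (real l * (2*pi*r/L))" unfolding w_def by (simp only: Complex.DeMoivre)
    also have "real l * (2*pi*r/L) = 2*pi*r*l/L" by simp
    finally show ?thesis by simp
  qed
  have wL: "w ^ L = 1"
  proof -
    have "w ^ L = cis (2*pi*r)" using L by (simp add: w_def Complex.DeMoivre)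
    also have "\<dots> = 1" by (rule cis_multiple_2pi) simp
    finally show ?thesis .
  qed
  show ?thesis
  proof (cases "int L dvd r")
    case True
    then obtain j where j: "r = int L * j" by blast
    have "w = cis (2*pi*real_of_int j)" unfolding w_def j by (rule arg_cong[where f=cis]) (use L in simp)
    also have "\<dots> = 1" by (rule cis_multiple_2pi) simp
    finally have "w = 1" .
    then show ?thesis using True by (simp add: terms)
  next
    case False
    have "w \<noteq> 1"
    proof
      assume "w = 1"
      then have "cos (2*pi*r/L) = 1" unfolding w_def by (simp add: complex_eq_iff)
      then obtain x :: int where "2*pi*r/L = real_of_int x * 2 * pi" by (auto simp: cos_one_2pi_int)
      then have "real_of_int r = real L * real_of_int x" using L by (simp add: field_simps)
      then have "r = int L * x" by (metis of_int_eq_iff of_int_mult of_int_of_nat_eq)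
      then show False using False by auto
    qed
    then have "(\<Sum>l<L. w ^ l) = 0" using wL by (simp add: geometric_sum)
    then show ?thesis using False by (simp add: terms)
  qed
qed

lemma cos_le_cos_pi_L:
  fixes L l :: nat
  assumes "l < L"
  shows "cos ((2*l+1)*pi/L) \<le> cos (pi/L)"
proof -
  have L: "real L \<ge> 1" using assms by simp
  define x where "x = (2*l+1)*pi/L"
  have x1: "pi/L \<le> x" unfolding x_def using L by (simp add: divide_right_mono)
  have x2: "x \<le> 2*pi - pi/L"
  proof -
    have "(2*real l+1) \<le> 2*L - 1" using assms by linarith
    then have "(2*real l+1)*pi \<le> (2*L-1)*pi" by (simp add: mult_right_mono)
    then have "(2*real l+1)*pi/L \<le> (2*L-1)*pi/L" using L by (simp add: divide_right_mono)
    also have "(2*L-1)*pi/L = 2*pi - pi/L" using L by (simp add: field_simps)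
    finally show ?thesis by (simp add: x_def ac_simps)
  qed
  have p0: "0 \<le> pi/L" using L by simp
  have p1: "pi/L \<le> pi" using L by (simp add: field_simps)
  show ?thesis
  proof (cases "x \<le> pi")
    case True
    have "cos x \<le> cos (pi/L)" using True x1 p0 by (intro cos_monotone_0_pi_le) auto
    then show ?thesis by (simp add: x_def ac_simps)
  next
    case False
    have "cos x = cos (2*pi - x)" by (simp add: cos_diff)
    also have "\<dots> \<le> cos (pi/L)" using x2 False p0 by (intro cos_monotone_0_pi_le) auto
    finally show ?thesis by (simp add: x_def)
  qed
qed

lemma aux_lin: "(V::complex) = 1 - (P+Q)/D \<Longrightarrow> V*Z = Z - (P*Z+Q*Z)/D"
  by (simp add: left_diff_distrib times_divide_eq_left distrib_right)

lemma cos_cplx: "complex_of_real (cos x) = (cis x + cis (-x)) / 2"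
  by (simp add: complex_eq_iff)

lemma ES1:
  fixes d :: "nat \<Rightarrow> complex" and A :: real and N L :: nat
  assumes N1: "1 \<le> N" and NL: "N + 2 \<le> L"
    and pos: "\<And>\<theta>::real. 0 \<le> A + 2 * Re (\<Sum>r\<in>{1..N}. d r * cis (real r * \<theta>))"
  shows "cmod (d 1) \<le> A * cos (pi / L)"
proof -
  have L3: "real L \<ge> 3" using N1 NL by simp
  define c0 where "c0 = cos (pi / L)"
  have hL: "real L \<noteq> 0" using L3 by simp
  have c0pos: "c0 > 0" unfolding c0_def
  proof (rule cos_gt_zero_pi)
    have "pi/L > 0" using L3 by simp
    then show "- (pi/2) < pi/L" using pi_gt_zero by linarith
    have "pi/L \<le> pi/3" using L3 by (intro divide_left_mono) auto
    also have "pi/3 < pi/2" using pi_gt_zero by (simp add: field_simps)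
    finally show "pi/L < pi/2" .
  qed
  define \<phi> where "\<phi> = pi/L - Arg (d 1)"
  define \<theta> where "\<theta> l = \<phi> + 2*pi*l/L" for l :: nat
  define v where "v l = 1 - cos ((2*l+1)*pi/L) / c0" for l :: nat
  have vnn: "v l \<ge> 0" if "l < L" for l
    using cos_le_cos_pi_L[OF that] c0pos by (simp add: v_def c0_def)
  have key: "(\<Sum>l<L. complex_of_real (v l) * cis (r * \<theta> l))
      = (if r = 1 then - (of_real (L / (2*c0))) * cis (\<phi> - pi/L) else 0)"
    if r: "1 \<le> r" "r \<le> N" for r :: nat
  proof -
    have eq: "complex_of_real (v l) * cis (r * \<theta> l) = cis (r*\<phi>) * (cis (2*pi*real_of_int (int r)*l/L)
       - (1/(2*c0)) * (cis (pi/L) * cis (2*pi*real_of_int (int r + 1)*l/L)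
           + cis (-pi/L) * cis (2*pi*real_of_int (int r - 1)*l/L)))" for l :: nat
    proof -
      have a1: "cis ((2*l+1)*pi/L) * cis (r * \<theta> l) = cis (r*\<phi>) * (cis (pi/L) * cis (2*pi*real_of_int (int r + 1)*l/L))"
        unfolding cis_mult by (rule arg_cong[where f=cis]) (simp add: \<theta>_def algebra_simps add_divide_distrib diff_divide_distrib)
      have a2: "cis (-((2*l+1)*pi/L)) * cis (r * \<theta> l) = cis (r*\<phi>) * (cis (-pi/L) * cis (2*pi*real_of_int (int r - 1)*l/L))"
        unfolding cis_mult by (rule arg_cong[where f=cis]) (simp add: \<theta>_def algebra_simps add_divide_distrib diff_divide_distrib)
      have a3: "cis (r * \<theta> l) = cis (r*\<phi>) * cis (2*pi*real_of_int (int r)*l/L)"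
        unfolding cis_mult by (rule arg_cong[where f=cis]) (simp add: \<theta>_def algebra_simps add_divide_distrib diff_divide_distrib)
      have "complex_of_real (v l) = 1 - (cis ((2*l+1)*pi/L) + cis (-((2*l+1)*pi/L))) / (2 * c0)"
        unfolding v_def using c0pos by (simp add: cos_cplx field_simps)
      then have "complex_of_real (v l) * cis (r * \<theta> l) = cis (r * \<theta> l)
         - (cis ((2*l+1)*pi/L) * cis (r * \<theta> l) + cis (-((2*l+1)*pi/L)) * cis (r * \<theta> l)) / (2*c0)"
        by (rule aux_lin)
      also have "\<dots> = cis (r*\<phi>) * (cis (2*pi*real_of_int (int r)*l/L)
       - (1/(2*c0)) * (cis (pi/L) * cis (2*pi*real_of_int (int r + 1)*l/L)
           + cis (-pi/L) * cis (2*pi*real_of_int (int r - 1)*l/L)))"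
        unfolding a1 a2 unfolding a3 by (simp add: algebra_simps add_divide_distrib)
      finally show ?thesis .
    qed
    have L0: "L > 0" using L3 by simp
    have d1: "\<not> int L dvd int r"
    proof
      assume "int L dvd int r"
      then have "L dvd r" by simp
      then have "L \<le> r" using r by (simp add: dvd_imp_le)
      then show False using r NL by simp
    qed
    have d2: "\<not> int L dvd (int r + 1)" using r NL by (auto dest: zdvd_imp_le)
    have d3: "int L dvd (int r - 1) \<longleftrightarrow> r = 1"
    proof
      assume h: "int L dvd (int r - 1)"
      show "r = 1"
      proof (rule ccontr)
        assume "r \<noteq> 1"
        then have "int r - 1 > 0" using r by simp
        then have "int L \<le> int r - 1" using zdvd_imp_le[OF h] by blast
        then show False using r NL by simp
      qed
    qed simp
    have s1: "(\<Sum>l<L. cis (2*pi*real_of_int (int r)*l/L)) = 0"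
      by (subst sum_cis_int[OF L0]) (use d1 in simp)
    have s2: "(\<Sum>l<L. cis (2*pi*real_of_int (int r + 1)*l/L)) = 0"
      by (subst sum_cis_int[OF L0]) (use d2 in simp)
    have s3: "(\<Sum>l<L. cis (2*pi*real_of_int (int r - 1)*l/L)) = (if r = 1 then of_nat L else 0)"
      by (subst sum_cis_int[OF L0]) (use d3 in simp)
    have cm: "cis \<phi> * cis (-(pi/L)) = cis (\<phi> - pi/L)" by (simp add: cis_mult)
    have "(\<Sum>l<L. complex_of_real (v l) * cis (r * \<theta> l)) =
       cis (r*\<phi>) * ((\<Sum>l<L. cis (2*pi*real_of_int (int r)*l/L))
       - (1/(2*c0)) * (cis (pi/L) * (\<Sum>l<L. cis (2*pi*real_of_int (int r + 1)*l/L))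
           + cis (-pi/L) * (\<Sum>l<L. cis (2*pi*real_of_int (int r - 1)*l/L))))"
      unfolding eq by (simp add: sum_distrib_left sum_subtractf sum.distrib algebra_simps)
    also have "\<dots> = cis (r*\<phi>) * (0 - (1/(2*c0)) * (cis (pi/L) * 0 + cis (-pi/L) * (if r = 1 then of_nat L else 0)))"
      by (simp only: s1 s2 s3)
    also have "\<dots> = (if r = 1 then - (of_real (L / (2*c0))) * cis (\<phi> - pi/L) else 0)"
    proof (cases "r = 1")
      case True
      have "cis (r*\<phi>) * (0 - (1/(2*c0)) * (cis (pi/L) * 0 + cis (-pi/L) * (if r = 1 then of_nat L else 0)))
          = - (of_real (L / (2*c0))) * (cis \<phi> * cis (-(pi/L)))"
        using True by simp
      then show ?thesis using True cm by simp
    qed simp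
    finally show ?thesis .
  qed
  have sumv: "(\<Sum>l<L. v l) = L"
  proof -
    have L0: "L > 0" using L3 by simp
    have e: "complex_of_real (cos ((2*l+1)*pi/L)) = (cis (pi/L) * cis (2*pi*real_of_int 1*l/L)
          + cis (-(pi/L)) * cis (2*pi*real_of_int (-1)*l/L)) / 2" for l :: nat
    proof -
      have "cis (pi/L) * cis (2*pi*real_of_int 1*l/L) = cis ((2*l+1)*pi/L)"
        unfolding cis_mult by (rule arg_cong[where f=cis]) (simp add: algebra_simps add_divide_distrib)
      moreover have "cis (-(pi/L)) * cis (2*pi*real_of_int (-1)*l/L) = cis (-((2*l+1)*pi/L))"
        unfolding cis_mult by (rule arg_cong[where f=cis]) (simp add: algebra_simps add_divide_distrib diff_divide_distrib)
      ultimately show ?thesis by (simp only: cos_cplx)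
    qed
    have z1: "(\<Sum>l<L. cis (2*pi*real_of_int 1*l/L)) = 0"
      by (subst sum_cis_int[OF L0]) (use L3 in simp)
    have z2: "(\<Sum>l<L. cis (2*pi*real_of_int (-1)*l/L)) = 0"
      by (subst sum_cis_int[OF L0]) (use L3 in simp)
    have "(\<Sum>l<L. complex_of_real (cos ((2*l+1)*pi/L))) =
        (cis (pi/L) * (\<Sum>l<L. cis (2*pi*real_of_int 1*l/L)) +
        cis (-(pi/L)) * (\<Sum>l<L. cis (2*pi*real_of_int (-1)*l/L))) / 2"
      unfolding e by (simp only: sum_divide_distrib[symmetric] sum.distrib sum_distrib_left)
    also have "\<dots> = 0" by (simp only: z1 z2) simp
    finally have "(\<Sum>l<L. cos ((2*l+1)*pi/L)) = 0"
      by (metis of_real_eq_0_iff of_real_sum)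
    then show ?thesis by (simp add: v_def sum_subtractf sum_divide_distrib[symmetric])
  qed
  define G where "G t = (\<Sum>r\<in>{1..N}. d r * cis (real r * t))" for t :: real
  define W where "W = - (of_real (L / (2*c0))) * cis (\<phi> - pi/L)"
  have nonneg: "0 \<le> (\<Sum>l<L. v l * (A + 2 * Re (G (\<theta> l))))"
    by (intro sum_nonneg mult_nonneg_nonneg vnn) (simp_all only: G_def pos lessThan_iff)
  have "(\<Sum>l<L. complex_of_real (v l) * G (\<theta> l)) = (\<Sum>r\<in>{1..N}. d r * (\<Sum>l<L. complex_of_real (v l) * cis (r * \<theta> l)))"
    unfolding G_def by (simp add: sum_distrib_left mult_ac) (rule sum.swap)
  also have "\<dots> = (\<Sum>r\<in>{1..N}. d r * (if r = 1 then W else 0))"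
    by (intro sum.cong refl) (simp add: key W_def)
  also have "\<dots> = (\<Sum>r\<in>{1..N}. if r = 1 then d 1 * W else 0)" by (intro sum.cong) auto
  also have "\<dots> = d 1 * W" using N1 by simp
  finally have sG: "(\<Sum>l<L. complex_of_real (v l) * G (\<theta> l)) = d 1 * W" .
  have dW: "d 1 * W = - of_real (L / (2*c0) * cmod (d 1))"
  proof -
    have "\<phi> - pi/L = - Arg (d 1)" by (simp add: \<phi>_def)
    then have "d 1 * cis (\<phi> - pi/L) = of_real (cmod (d 1)) * (cis (Arg (d 1)) * cis (- Arg (d 1)))"
      by (metis (no_types, lifting) mult.assoc rcis_cmod_Arg rcis_def)
    also have "\<dots> = of_real (cmod (d 1))" by (simp add: cis_mult)
    finally show ?thesis by (simp add: W_def mult_ac)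
  qed
  have "(\<Sum>l<L. v l * (A + 2 * Re (G (\<theta> l)))) = A * (\<Sum>l<L. v l) + 2 * Re (\<Sum>l<L. complex_of_real (v l) * G (\<theta> l))"
    by (simp add: sum_distrib_left sum_distrib_right sum.distrib algebra_simps Re_sum)
  also have "\<dots> = A * L - L / c0 * cmod (d 1)" unfolding sumv sG dW by simp
  finally have "0 \<le> A * L - L / c0 * cmod (d 1)" using nonneg by simp
  then have "L / c0 * cmod (d 1) \<le> A * L" by simp
  then have "cmod (d 1) \<le> A * c0" using c0pos L3 by (simp add: field_simps)
  then show ?thesis by (simp add: c0_def)
qed

lemma ESq:
  fixes c :: "nat \<Rightarrow> complex" and A :: real and q P L :: nat
  assumes q1: "1 \<le> q" and qP: "q \<le> P" and PL: "P < q * (L - 1)"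
    and pos: "\<And>\<theta>::real. 0 \<le> A + 2 * Re (\<Sum>p\<in>{1..P}. c p * cis (real p * \<theta>))"
  shows "cmod (c q) \<le> A * cos (pi / L)"
proof -
  define N where "N = P div q"
  have N1: "1 \<le> N" using q1 qP by (simp add: N_def div_greater_zero_iff Suc_le_eq)
  have "N < L - 1" using less_mult_imp_div_less[of P "L-1" q] PL by (simp add: N_def mult.commute)
  then have NL: "N + 2 \<le> L" by simp
  have q0: "q > 0" using q1 by simp
  have img: "(\<lambda>r. r * q) ` {1..N} = {p\<in>{1..P}. q dvd p}"
  proof (intro set_eqI iffI)
    fix p assume "p \<in> (\<lambda>r. r * q) ` {1..N}"
    then obtain r where r: "r \<in> {1..N}" "p = r * q" by auto
    have "r * q \<le> N * q" using r by simp
    also have "N * q \<le> P" by (simp add: N_def)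
    finally show "p \<in> {p\<in>{1..P}. q dvd p}" using r q1 by auto
  next
    fix p assume p: "p \<in> {p\<in>{1..P}. q dvd p}"
    then obtain r where r: "p = r * q" by (auto elim: dvdE simp: mult.commute)
    have "r \<ge> 1" using p r by (cases r) auto
    moreover have "r \<le> N"
    proof -
      have "r * q div q \<le> P div q" using p r by (intro div_le_mono) simp
      then show ?thesis using q0 by (simp add: N_def)
    qed
    ultimately show "p \<in> (\<lambda>r. r * q) ` {1..N}" using r by auto
  qed
  have inj: "inj_on (\<lambda>r. r * q) {1..N}" using q0 by (auto simp: inj_on_def)
  have "cmod ((\<lambda>r. c (r * q)) 1) \<le> A * cos (pi / L)"
  proof (rule ES1[OF N1 NL])
    fix \<theta> :: real
    define y where "y j = (\<theta> + 2*pi*j) / q" for j :: nat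
    have e: "cis (real p * y j) = cis (real p * \<theta> / q) * cis (2*pi*real_of_int (int p)*j/q)" for p j
      unfolding cis_mult y_def by (rule arg_cong[where f=cis]) (simp add: algebra_simps add_divide_distrib)
    have "(\<Sum>j<q. \<Sum>p\<in>{1..P}. c p * cis (real p * y j))
        = (\<Sum>p\<in>{1..P}. c p * cis (real p * \<theta> / q) * (\<Sum>j<q. cis (2*pi*real_of_int (int p)*j/q)))"
      unfolding e by (subst sum.swap) (simp add: sum_distrib_left mult_ac)
    also have "\<dots> = (\<Sum>p\<in>{1..P}. if q dvd p then of_nat q * (c p * cis (real p * \<theta> / q)) else 0)"
      by (intro sum.cong refl) (subst sum_cis_int[OF q0], simp)
    also have "\<dots> = of_nat q * (\<Sum>p\<in>{p\<in>{1..P}. q dvd p}. c p * cis (real p * \<theta> / q))"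
      by (simp add: sum.inter_filter[symmetric] sum_distrib_left)
    also have "\<dots> = of_nat q * (\<Sum>r\<in>{1..N}. c (r * q) * cis (real r * \<theta>))"
      unfolding img[symmetric] sum.reindex[OF inj] using q0 by (simp add: o_def)
    finally have eqs: "(\<Sum>j<q. \<Sum>p\<in>{1..P}. c p * cis (real p * y j)) = of_nat q * (\<Sum>r\<in>{1..N}. c (r * q) * cis (real r * \<theta>))" .
    have "0 \<le> (\<Sum>j<q. A + 2 * Re (\<Sum>p\<in>{1..P}. c p * cis (real p * y j)))"
      by (intro sum_nonneg pos)
    also have "\<dots> = q * A + 2 * Re (\<Sum>j<q. \<Sum>p\<in>{1..P}. c p * cis (real p * y j))"
      by (simp add: sum.distrib Re_sum sum_distrib_left)
    also have "\<dots> = q * (A + 2 * Re (\<Sum>r\<in>{1..N}. c (r * q) * cis (real r * \<theta>)))"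
      unfolding eqs by (simp add: algebra_simps)
    finally show "0 \<le> A + 2 * Re (\<Sum>r\<in>{1..N}. c (r * q) * cis (real r * \<theta>))"
      using q0 by (simp add: zero_le_mult_iff)
  qed
  then show ?thesis by simp
qed

definition smul :: "complex \<Rightarrow> op" where "smul c = (\<lambda>h l. c * h l)"

lemma smul_apply: "smul c h l = c * h l" by (simp add: smul_def)

lemma L2_smul: "f \<in> L2 \<Longrightarrow> (\<lambda>l. c * f l) \<in> L2"
  unfolding L2_def by (simp add: norm_mult power_mult_distrib summable_mult)

lemma norm2_smul: "f \<in> L2 \<Longrightarrow> norm2 (\<lambda>l. c * f l) = cmod c * norm2 f"
  unfolding norm2_def L2_def
  by (simp add: norm_mult power_mult_distrib suminf_mult real_sqrt_mult)

lemma norm2_nonneg: "f \<in> L2 \<Longrightarrow> 0 \<le> norm2 f"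
  unfolding norm2_def L2_def by (simp add: suminf_nonneg)

lemma basis_sq: "(\<lambda>i. (cmod (basis2 j i))\<^sup>2) = (\<lambda>i. if i = j then 1 else 0)"
  by (auto simp: basis2_def)

lemma basis_L2: "basis2 j \<in> L2"
  unfolding L2_def mem_Collect_eq basis_sq using sums_single[of j "\<lambda>_. 1::real"] by (rule sums_summable)

lemma norm2_basis: "norm2 (basis2 j) = 1"
  unfolding norm2_def basis_sq using sums_single[of j "\<lambda>_. 1::real"] by (simp add: sums_iff)

lemma zero_L2: "(\<lambda>_. 0) \<in> L2" unfolding L2_def by simp
lemma norm2_zero: "norm2 (\<lambda>_. 0) = 0" unfolding norm2_def by simp

lemma bop_smul: "bop (smul c)"
  unfolding bop_def smul_def
proof (intro conjI ballI allI)
  show "\<exists>C. \<forall>f\<in>L2. norm2 (\<lambda>l. c * f l) \<le> C * norm2 f"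
    by (rule exI[of _ "cmod c"]) (simp add: norm2_smul)
qed (auto simp: L2_smul algebra_simps)

lemma suminf_single_at: "(\<Sum>i. if i = j then (x::'a::{t2_space,comm_monoid_add,topological_space}) else 0) = x"
  using sums_single[of j "\<lambda>_. x"] by (simp add: sums_iff)

lemma adj_smul: "adj (smul c) h = (\<lambda>l. cnj c * h l)"
proof
  fix l
  have "(\<lambda>i. h i * cnj (c * basis2 l i)) = (\<lambda>i. if i = l then cnj c * h l else 0)"
    by (auto simp: basis2_def)
  then show "adj (smul c) h l = cnj c * h l"
    unfolding adj_def smul_def by (simp add: suminf_single_at)
qed

lemma inner2_basis0: "inner2 f (basis2 j) = f j"
proof -
  have "(\<lambda>i. f i * cnj (basis2 j i)) = (\<lambda>i. if i = j then f j else 0)"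
    by (auto simp: basis2_def)
  then show ?thesis unfolding inner2_def by (simp add: suminf_single_at)
qed

lemma opnorm_smul_le: "opnorm (smul c) \<le> cmod c"
  unfolding opnorm_def smul_def
proof (rule cSup_least)
  show "{norm2 (\<lambda>l. c * f l) |f. f \<in> L2 \<and> norm2 f \<le> 1} \<noteq> {}"
    using zero_L2 norm2_zero by fastforce
next
  fix x assume "x \<in> {norm2 (\<lambda>l. c * f l) |f. f \<in> L2 \<and> norm2 f \<le> 1}"
  then obtain f where f: "f \<in> L2" "norm2 f \<le> 1" "x = norm2 (\<lambda>l. c * f l)" by auto
  then show "x \<le> cmod c" by (simp add: norm2_smul mult_left_le)
qed

lemma opnorm_ge:
  assumes "\<forall>f\<in>L2. norm2 f \<le> 1 \<longrightarrow> norm2 (T f) \<le> C" "f \<in> L2" "norm2 f \<le> 1"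
  shows "norm2 (T f) \<le> opnorm T"
  unfolding opnorm_def
  by (rule cSup_upper) (use assms in \<open>auto intro!: bdd_aboveI[where M=C]\<close>)

lemma positive_smul: "0 \<le> d \<Longrightarrow> positive_op (smul (of_real d))"
  unfolding positive_op_def
proof (intro ballI conjI)
  fix h assume h: "h \<in> L2" and d: "0 \<le> d"
  have e: "(\<lambda>i. smul (of_real d) h i * cnj (h i)) = (\<lambda>i. of_real (d * (cmod (h i))\<^sup>2))"
    by (auto simp: smul_def complex_norm_square[symmetric] mult_ac)
  have s: "summable (\<lambda>i. d * (cmod (h i))\<^sup>2)" using h unfolding L2_def by (intro summable_mult) simp
  have eq: "inner2 (smul (of_real d) h) h = of_real (\<Sum>i. d * (cmod (h i))\<^sup>2)"
    unfolding inner2_def e by (rule suminf_of_real[OF s, symmetric])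
  show "inner2 (smul (of_real d) h) h \<in> \<real>" unfolding eq by simp
  show "0 \<le> Re (inner2 (smul (of_real d) h) h)" unfolding eq using s d
    by (simp add: suminf_nonneg)
qed

lemma invertible_smul: "d \<noteq> 0 \<Longrightarrow> invertible_op (smul d)"
  unfolding invertible_op_def
  by (intro conjI bop_smul exI[of _ "smul (1/d)"]) (auto simp: smul_def)


definition sig :: "(nat \<Rightarrow> nat) \<Rightarrow> (nat \<Rightarrow> nat \<Rightarrow> complex) \<Rightarrow> nat \<Rightarrow> real" where
  "sig n z i = (\<Sum>j<n i. (cmod (z i j))\<^sup>2)"

lemma zcnj: "z * (cnj z * h) = complex_of_real ((cmod z)\<^sup>2) * h"
  by (metis complex_norm_square mult.assoc)

lemma sum_adj_smul: "(\<lambda>h l. \<Sum>j<n i. smul (z i j) (adj (smul (z i j)) h) l) = smul (of_real (sig n z i))"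
proof (intro ext)
  fix h l
  have "(\<Sum>j<n i. smul (z i j) (adj (smul (z i j)) h) l) = (\<Sum>j<n i. of_real ((cmod (z i j))\<^sup>2) * h l)"
    by (intro sum.cong refl) (simp only: adj_smul smul_apply zcnj)
  also have "\<dots> = smul (of_real (sig n z i)) h l"
    by (simp add: smul_def sig_def sum_distrib_right)
  finally show "(\<Sum>j<n i. smul (z i j) (adj (smul (z i j)) h) l) = smul (of_real (sig n z i)) h l" .
qed

lemma Phi_smul: "Phi (n i) (\<lambda>i j. smul (z i j)) i (smul d) = smul (d * of_real (sig n z i))"
proof (intro ext)
  fix h l
  have "Phi (n i) (\<lambda>i j. smul (z i j)) i (smul d) h l = (\<Sum>j<n i. d * (of_real ((cmod (z i j))\<^sup>2) * h l))"
    unfolding Phi_def by (intro sum.cong refl) (simp only: adj_smul smul_apply zcnj mult.left_commute[of _ d])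
  also have "\<dots> = smul (d * of_real (sig n z i)) h l"
    by (simp add: smul_def sig_def sum_distrib_right sum_distrib_left mult_ac)
  finally show "Phi (n i) (\<lambda>i j. smul (z i j)) i (smul d) h l = smul (d * of_real (sig n z i)) h l" .
qed

lemma smul_one: "smul 1 = id" by (auto simp: smul_def)

lemma Delta_foldr:
  assumes "\<forall>i\<in>set xs. sig n z i < 1"
  shows "\<exists>d>0. foldr (\<lambda>i D Y. (\<lambda>h l. D Y h l - Phi (n i) (\<lambda>i j. smul (z i j)) i (D Y) h l)) xs (\<lambda>Y. Y) id
           = smul (of_real d)"
  using assms
proof (induction xs)
  case Nil
  then show ?case by (intro exI[of _ 1]) (simp add: smul_one)
next
  case (Cons i xs)
  have "\<forall>i\<in>set xs. sig n z i < 1" using Cons.prems by simp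
  then obtain d where d: "d > 0" "foldr (\<lambda>i D Y. (\<lambda>h l. D Y h l - Phi (n i) (\<lambda>i j. smul (z i j)) i (D Y) h l)) xs (\<lambda>Y. Y) id
           = smul (of_real d)" using Cons.IH by blast
  have si: "sig n z i < 1" using Cons.prems by simp
  have "foldr (\<lambda>i D Y. (\<lambda>h l. D Y h l - Phi (n i) (\<lambda>i j. smul (z i j)) i (D Y) h l)) (i#xs) (\<lambda>Y. Y) id
     = (\<lambda>h l. smul (of_real d) h l - Phi (n i) (\<lambda>i j. smul (z i j)) i (smul (of_real d)) h l)"
    by (simp only: foldr_Cons o_apply d(2))
  also have "\<dots> = smul (of_real (d * (1 - sig n z i)))"
    unfolding Phi_smul by (auto simp: smul_def algebra_simps)
  finally have eq: "foldr (\<lambda>i D Y. (\<lambda>h l. D Y h l - Phi (n i) (\<lambda>i j. smul (z i j)) i (D Y) h l)) (i#xs) (\<lambda>Y. Y) id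
     = smul (of_real (d * (1 - sig n z i)))" .
  have "d * (1 - sig n z i) > 0" using d si by simp
  with eq show ?case by blast
qed

lemma polyball_smul:
  assumes "\<forall>i<k. sig n z i < 1"
  shows "in_polyball k n (\<lambda>i j. smul (z i j))"
proof -
  obtain d where d: "d > 0" "Delta k n (\<lambda>i j. smul (z i j)) id = smul (of_real d)"
    using Delta_foldr[of "[0..<k]" n z] assms unfolding Delta_def by auto
  have "opnorm (\<lambda>h l. \<Sum>j<n i. smul (z i j) (adj (smul (z i j)) h) l) < 1" if "i < k" for i
  proof -
    have "sig n z i \<ge> 0" by (simp add: sig_def sum_nonneg)
    then have "opnorm (smul (of_real (sig n z i))) \<le> sig n z i"
      using opnorm_smul_le[of "of_real (sig n z i)"] by simp
    then show ?thesis unfolding sum_adj_smul using assms[rule_format, OF that] by linarith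
  qed
  then show ?thesis unfolding in_polyball_def using d
    by (auto simp: bop_smul smul_apply positive_smul invertible_smul)
qed

lemma smul_comp: "smul a \<circ> smul b = smul (a * b)"
  by (auto simp: smul_def o_def mult.assoc)

lemma smul_comp': "(\<lambda>x. smul a (smul b x)) = smul (a * b)"
  by (auto simp: smul_def mult.assoc)

lemma X_word_smul: "X_word (\<lambda>i j. smul (z i j)) i w = smul (prod_list (map (z i) w))"
proof (induction w)
  case Nil
  then show ?case by (simp add: X_word_def smul_one)
next
  case (Cons j w)
  then show ?case by (simp add: X_word_def smul_comp)
qed

lemma X_multi_foldr: "foldr (\<lambda>i T. X_word (\<lambda>i j. smul (z i j)) i (\<alpha> i) \<circ> T) xs id
    = smul (prod_list (map (\<lambda>i. prod_list (map (z i) (\<alpha> i))) xs))"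
proof (induction xs)
  case Nil
  then show ?case by (simp add: smul_one)
next
  case (Cons i xs)
  then show ?case by (simp add: X_word_smul smul_comp smul_comp')
qed

lemma X_multi_smul: "X_multi k (\<lambda>i j. smul (z i j)) \<alpha> = smul (lam_multi k z \<alpha>)"
proof -
  have "prod_list (map (\<lambda>i. prod_list (map (z i) (\<alpha> i))) [0..<k]) = lam_multi k z \<alpha>"
    unfolding lam_multi_def
    by (subst prod.distinct_set_conv_list[symmetric]) (auto simp: atLeast0LessThan)
  then show ?thesis unfolding X_multi_def X_multi_foldr by simp
qed

definition pq :: "nat \<Rightarrow> (nat \<Rightarrow> nat) \<Rightarrow> ((nat \<Rightarrow> nat list) \<Rightarrow> complex) \<Rightarrow> nat \<Rightarrow> (nat \<Rightarrow> nat \<Rightarrow> complex) \<Rightarrow> complex" where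
  "pq k n a q z = (\<Sum>\<alpha>\<in>Gamma k n q. a \<alpha> * lam_multi k z \<alpha>)"

lemma P_op_smul: "P_op k n a (\<lambda>i j. smul (z i j)) q = smul (pq k n a q z)"
  unfolding P_op_def pq_def X_multi_smul
  by (auto simp: smul_def sum_distrib_right mult.assoc)

lemma prod_list_scale: "prod_list (map (\<lambda>j. (w::complex) * z j) xs) = w ^ length xs * prod_list (map z xs)"
  by (induction xs) (auto simp: mult_ac)

lemma lam_multi_scale: "lam_multi k (\<lambda>i j. w * z i j) \<alpha> = w ^ (\<Sum>i<k. length (\<alpha> i)) * lam_multi k z \<alpha>"
  unfolding lam_multi_def prod_list_scale by (simp add: prod.distrib power_sum)

lemma pq_scale: "pq k n a q (\<lambda>i j. w * z i j) = w ^ q * pq k n a q z"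
  unfolding pq_def lam_multi_scale
  by (auto simp: Gamma_def sum_distrib_left mult_ac intro!: sum.cong)

lemma sig_scale: "sig n (\<lambda>i j. w * z i j) i = (cmod w)\<^sup>2 * sig n z i"
  by (simp add: sig_def norm_mult power_mult_distrib sum_distrib_left)

lemma g_basis: "inner2 (g_op a0 S (basis2 0)) (basis2 0) = cnj (S (basis2 0) 0) + of_real a0 + S (basis2 0) 0"
proof -
  have "(\<lambda>i. basis2 0 i * cnj (S (basis2 0) i)) = (\<lambda>i. if i = 0 then cnj (S (basis2 0) 0) else 0)"
    by (auto simp: basis2_def)
  then have "adj S (basis2 0) 0 = cnj (S (basis2 0) 0)"
    unfolding adj_def by (simp add: suminf_single_at)
  then show ?thesis unfolding inner2_basis0 g_op_def by (simp add: basis2_def)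
qed

lemma pos_scalar: "positive_op (g_op a0 S) \<Longrightarrow> 0 \<le> a0 + 2 * Re (S (basis2 0) 0)"
  unfolding positive_op_def using basis_L2[of 0]
  by (drule_tac x="basis2 0" in bspec) (auto simp: g_basis)

lemma sq_diff_le: "(cmod (x - y))\<^sup>2 \<le> 2 * (cmod x)\<^sup>2 + 2 * (cmod y)\<^sup>2"
proof -
  have "cmod (x - y) \<le> cmod x + cmod y" by (rule norm_triangle_ineq4)
  then have "(cmod (x - y))\<^sup>2 \<le> (cmod x + cmod y)\<^sup>2" by (intro power_mono) auto
  also have "\<dots> \<le> 2 * (cmod x)\<^sup>2 + 2 * (cmod y)\<^sup>2"
  proof -
    have "0 \<le> (cmod x - cmod y)\<^sup>2" by simp
    then show ?thesis by (simp add: power2_eq_square algebra_simps)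
  qed
  finally show ?thesis .
qed

lemma L2_diff:
  assumes "f \<in> L2" "g \<in> L2"
  shows "(\<lambda>l. f l - g l) \<in> L2"
    and "norm2 (\<lambda>l. f l - g l) \<le> sqrt (2 * (\<Sum>i. (cmod (f i))\<^sup>2) + 2 * (\<Sum>i. (cmod (g i))\<^sup>2))"
proof -
  have sf: "summable (\<lambda>i. (cmod (f i))\<^sup>2)" and sg: "summable (\<lambda>i. (cmod (g i))\<^sup>2)"
    using assms by (auto simp: L2_def)
  have s2: "summable (\<lambda>i. 2 * (cmod (f i))\<^sup>2 + 2 * (cmod (g i))\<^sup>2)"
    using sf sg by (intro summable_add summable_mult)
  have s: "summable (\<lambda>i. (cmod (f i - g i))\<^sup>2)"
    by (rule summable_comparison_test[OF _ s2]) (auto intro!: exI[of _ 0] sq_diff_le)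
  then show "(\<lambda>l. f l - g l) \<in> L2" by (simp add: L2_def)
  have "(\<Sum>i. (cmod (f i - g i))\<^sup>2) \<le> (\<Sum>i. 2 * (cmod (f i))\<^sup>2 + 2 * (cmod (g i))\<^sup>2)"
    by (rule suminf_le[OF sq_diff_le s s2])
  also have "\<dots> = 2 * (\<Sum>i. (cmod (f i))\<^sup>2) + 2 * (\<Sum>i. (cmod (g i))\<^sup>2)"
    using sf sg by (simp add: suminf_add[symmetric] suminf_mult summable_mult)
  finally show "norm2 (\<lambda>l. f l - g l) \<le> sqrt (2 * (\<Sum>i. (cmod (f i))\<^sup>2) + 2 * (\<Sum>i. (cmod (g i))\<^sup>2))"
    unfolding norm2_def by simp
qed

lemma sumsq_norm2: "f \<in> L2 \<Longrightarrow> (\<Sum>i. (cmod (f i))\<^sup>2) = (norm2 f)\<^sup>2"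
  unfolding norm2_def L2_def by (simp add: suminf_nonneg)

lemma coord_le_norm2:
  assumes "f \<in> L2" shows "cmod (f j) \<le> norm2 f"
proof -
  have "sum (\<lambda>i. (cmod (f i))\<^sup>2) {j} \<le> (\<Sum>i. (cmod (f i))\<^sup>2)"
    using assms by (intro sum_le_suminf) (auto simp: L2_def)
  then show ?thesis unfolding norm2_def by (intro real_le_rsqrt) simp
qed

lemma scalar_pos_fin:
  assumes conv: "\<forall>X. in_polyball k n X \<longrightarrow> (\<exists>S. bop S \<and> series_limit k n a m X S)"
    and pos: "\<forall>X S. in_polyball k n X \<and> bop S \<and> series_limit k n a m X S
                 \<longrightarrow> positive_op (g_op a0 S)"
    and m: "m = enat M" and z: "\<forall>i<k. sig n z i < 1"
  shows "0 \<le> a0 + 2 * Re (\<Sum>q\<in>{1..M}. pq k n a q z)"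
proof -
  have X: "in_polyball k n (\<lambda>i j. smul (z i j))" by (rule polyball_smul[OF z])
  then obtain S where S: "bop S" "series_limit k n a m (\<lambda>i j. smul (z i j)) S" using conv by blast
  have P: "positive_op (g_op a0 S)" using pos X S by blast
  have "S (basis2 0) = (\<lambda>l. \<Sum>q\<in>{1..M}. P_op k n a (\<lambda>i j. smul (z i j)) q (basis2 0) l)"
    using S(2) basis_L2[of 0] unfolding series_limit_def m by simp
  then have "S (basis2 0) 0 = (\<Sum>q\<in>{1..M}. pq k n a q z)"
    by (simp add: P_op_smul smul_apply basis2_def)
  then show ?thesis using pos_scalar[OF P] by simp
qed

lemma scalar_pos_inf:
  assumes conv: "\<forall>X. in_polyball k n X \<longrightarrow> (\<exists>S. bop S \<and> series_limit k n a m X S)"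
    and pos: "\<forall>X S. in_polyball k n X \<and> bop S \<and> series_limit k n a m X S
                 \<longrightarrow> positive_op (g_op a0 S)"
    and m: "m = \<infinity>" and z: "\<forall>i<k. sig n z i < 1"
  shows "\<exists>s. (\<lambda>N. \<Sum>q\<in>{1..N}. pq k n a q z) \<longlonglongrightarrow> s \<and> 0 \<le> a0 + 2 * Re s"
proof -
  have X: "in_polyball k n (\<lambda>i j. smul (z i j))" by (rule polyball_smul[OF z])
  then obtain S where S: "bop S" "series_limit k n a m (\<lambda>i j. smul (z i j)) S" using conv by blast
  have P: "positive_op (g_op a0 S)" using pos X S by blast
  define sN where "sN N = (\<Sum>q\<in>{1..N}. pq k n a q z)" for N
  define D where "D N = (\<lambda>h l. sN N * h l - S h l)" for N
  have DD: "(\<lambda>h l. (\<Sum>q\<in>{1..N}. P_op k n a (\<lambda>i j. smul (z i j)) q h l) - S h l) = D N" for N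
    by (auto simp: D_def sN_def P_op_smul smul_apply sum_distrib_right)
  have lim: "(\<lambda>N. opnorm (D N)) \<longlonglongrightarrow> 0"
    using S(2) unfolding series_limit_def m DD by simp
  obtain C0 where C0: "\<forall>f\<in>L2. norm2 (S f) \<le> C0 * norm2 f" using S(1) unfolding bop_def by blast
  have SL2: "\<forall>f\<in>L2. S f \<in> L2" using S(1) unfolding bop_def by blast
  have bound: "\<forall>f\<in>L2. norm2 f \<le> 1 \<longrightarrow> norm2 (D N f) \<le> sqrt (2 * (cmod (sN N))\<^sup>2 + 2 * C0\<^sup>2)" for N
  proof (intro ballI impI)
    fix f assume f: "f \<in> L2" "norm2 f \<le> 1"
    have nf: "0 \<le> norm2 f" by (rule norm2_nonneg[OF f(1)])
    have f1: "(\<lambda>l. sN N * f l) \<in> L2" by (rule L2_smul[OF f(1)])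
    have f2: "S f \<in> L2" using SL2 f by blast
    have a1: "(\<Sum>i. (cmod (sN N * f i))\<^sup>2) \<le> (cmod (sN N))\<^sup>2"
    proof -
      have "(\<Sum>i. (cmod (sN N * f i))\<^sup>2) = (cmod (sN N) * norm2 f)\<^sup>2"
        using sumsq_norm2[OF f1] norm2_smul[OF f(1)] by simp
      also have "\<dots> \<le> (cmod (sN N) * 1)\<^sup>2"
        using nf f(2) by (intro power_mono mult_left_mono) auto
      finally show ?thesis by simp
    qed
    have a2: "(\<Sum>i. (cmod (S f i))\<^sup>2) \<le> C0\<^sup>2"
    proof -
      have "norm2 (S f) \<le> C0 * norm2 f" using C0 f by blast
      also have "\<dots> \<le> \<bar>C0\<bar> * norm2 f" using nf by (intro mult_right_mono) auto
      also have "\<dots> \<le> \<bar>C0\<bar>" using nf f(2) by (simp add: mult_left_le)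
      finally have "norm2 (S f) \<le> \<bar>C0\<bar>" .
      then have "(norm2 (S f))\<^sup>2 \<le> \<bar>C0\<bar>\<^sup>2" using norm2_nonneg[OF f2] by (intro power_mono) auto
      then show ?thesis using sumsq_norm2[OF f2] by simp
    qed
    have "norm2 (D N f) \<le> sqrt (2 * (\<Sum>i. (cmod (sN N * f i))\<^sup>2) + 2 * (\<Sum>i. (cmod (S f i))\<^sup>2))"
      unfolding D_def by (rule L2_diff(2)[OF f1 f2])
    also have "\<dots> \<le> sqrt (2 * (cmod (sN N))\<^sup>2 + 2 * C0\<^sup>2)" using a1 a2 by simp
    finally show "norm2 (D N f) \<le> sqrt (2 * (cmod (sN N))\<^sup>2 + 2 * C0\<^sup>2)" .
  qed
  define s where "s = S (basis2 0) 0"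
  have le: "cmod (sN N - s) \<le> opnorm (D N)" for N
  proof -
    have e0: "basis2 0 \<in> L2" "norm2 (basis2 0) \<le> 1" by (simp_all add: basis_L2 norm2_basis)
    have inL2: "D N (basis2 0) \<in> L2" unfolding D_def
      by (rule L2_diff(1)[OF L2_smul[OF e0(1)]]) (use SL2 e0 in blast)
    have "cmod (D N (basis2 0) 0) \<le> norm2 (D N (basis2 0))" by (rule coord_le_norm2[OF inL2])
    also have "\<dots> \<le> opnorm (D N)" by (rule opnorm_ge[OF bound e0])
    finally show ?thesis by (simp add: D_def s_def basis2_def)
  qed
  have "(\<lambda>N. sN N - s) \<longlonglongrightarrow> 0"
    by (rule Lim_null_comparison[OF _ lim]) (use le in auto)
  then have "(\<lambda>N. sN N - s + s) \<longlonglongrightarrow> 0 + s" by (intro tendsto_add tendsto_const)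
  then have "sN \<longlonglongrightarrow> s" by simp
  moreover have "0 \<le> a0 + 2 * Re s" using pos_scalar[OF P] by (simp add: s_def)
  ultimately show ?thesis unfolding sN_def by blast
qed

lemma cos_pi_L_pos: "3 \<le> L \<Longrightarrow> cos (pi / real L) > 0"
proof (rule cos_gt_zero_pi)
  assume L3: "3 \<le> L"
  have "pi/L > 0" using L3 by simp
  then show "- (pi/2) < pi/L" using pi_gt_zero by linarith
  have "pi/L \<le> pi/3" using L3 by (intro divide_left_mono) auto
  also have "pi/3 < pi/2" using pi_gt_zero by (simp add: field_simps)
  finally show "pi/L < pi/2" .
qed

lemma rho_limit:
  fixes x B :: real
  assumes "\<And>\<rho>. 0 < \<rho> \<Longrightarrow> \<rho> < 1 \<Longrightarrow> x * \<rho> ^ q \<le> B"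
  shows "x \<le> B"
proof -
  have "((\<lambda>\<rho>. x * \<rho> ^ q) \<longlongrightarrow> x * 1 ^ q) (at_left (1::real))"
    by (intro tendsto_intros)
  moreover have "eventually (\<lambda>\<rho>. x * \<rho> ^ q \<le> B) (at_left (1::real))"
    using eventually_at_left_real[of 0 "1::real"] by (rule eventually_mono) (use assms in auto)
  ultimately have "x * 1 ^ q \<le> B"
    by (rule tendsto_upperbound) simp
  then show ?thesis by simp
qed

lemma cis_pow: "(complex_of_real r * cis t) ^ p = complex_of_real (r ^ p) * cis (real p * t)"
  by (simp add: power_mult_distrib Complex.DeMoivre)

lemma analytic_fin:
  assumes H: "\<And>w. cmod w < 1 \<Longrightarrow> 0 \<le> a0 + 2 * Re (\<Sum>p\<in>{1..M}. pq k n a p (\<lambda>i j. w * z i j))"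
    and q: "1 \<le> q" "q \<le> M"
  shows "cmod (pq k n a q z) \<le> a0 * cos (pi / (real (M div q) + 2))"
proof (rule rho_limit[where q=q])
  fix \<rho> :: real assume r: "0 < \<rho>" "\<rho> < 1"
  define L where "L = M div q + 2"
  have PL: "M < q * (L - 1)"
  proof -
    have e: "q * (M div q) + M mod q = M" by (rule mult_div_mod_eq)
    have "M mod q < q" using q by simp
    moreover have "q * (L - 1) = q + q * (M div q)" by (simp add: L_def algebra_simps)
    ultimately show ?thesis using e by linarith
  qed
  have "cmod ((\<lambda>p. pq k n a p z * of_real (\<rho> ^ p)) q) \<le> a0 * cos (pi / L)"
  proof (rule ESq[OF q PL])
    fix \<theta> :: real
    have "cmod (of_real \<rho> * cis \<theta>) < 1" using r by (simp add: norm_mult)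
    then have "0 \<le> a0 + 2 * Re (\<Sum>p\<in>{1..M}. pq k n a p (\<lambda>i j. (of_real \<rho> * cis \<theta>) * z i j))" by (rule H)
    also have "(\<Sum>p\<in>{1..M}. pq k n a p (\<lambda>i j. (of_real \<rho> * cis \<theta>) * z i j))
       = (\<Sum>p\<in>{1..M}. pq k n a p z * of_real (\<rho> ^ p) * cis (real p * \<theta>))"
      by (intro sum.cong refl) (simp only: pq_scale cis_pow, simp add: mult_ac)
    finally show "0 \<le> a0 + 2 * Re (\<Sum>p\<in>{1..M}. pq k n a p z * of_real (\<rho> ^ p) * cis (real p * \<theta>))" .
  qed
  then show "cmod (pq k n a q z) * \<rho> ^ q \<le> a0 * cos (pi / (real (M div q) + 2))"
    using r by (simp add: L_def norm_mult norm_power add.commute)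
qed

lemma head_sum: "g 0 = 0 \<Longrightarrow> (\<Sum>p<Suc N. g p) = (\<Sum>p\<in>{1..N}. (g p :: 'a::comm_monoid_add))"
  by (induction N) (auto simp: sum.lessThan_Suc)

lemma analytic_inf:
  assumes H: "\<And>w. cmod w < 1 \<Longrightarrow> \<exists>s. (\<lambda>N. \<Sum>q\<in>{1..N}. pq k n a q (\<lambda>i j. w * z i j)) \<longlonglongrightarrow> s \<and> 0 \<le> a0 + 2 * Re s"
    and q: "1 \<le> q"
  shows "cmod (pq k n a q z) \<le> a0"
proof (rule rho_limit[where q=q])
  fix \<rho> :: real assume r: "0 < \<rho>" "\<rho> < 1"
  define b where "b p = (if p = 0 then 0 else pq k n a p z)" for p
  have sums: "\<exists>s. (\<lambda>p. b p * w ^ p) sums s \<and> 0 \<le> a0 + 2 * Re s" if w: "cmod w < 1" for w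
  proof -
    obtain s where s: "(\<lambda>N. \<Sum>q\<in>{1..N}. pq k n a q (\<lambda>i j. w * z i j)) \<longlonglongrightarrow> s" "0 \<le> a0 + 2 * Re s"
      using H[OF w] by blast
    have "(\<Sum>q\<in>{1..N}. pq k n a q (\<lambda>i j. w * z i j)) = (\<Sum>p<Suc N. b p * w ^ p)" for N
    proof -
      have "(\<Sum>q\<in>{1..N}. pq k n a q (\<lambda>i j. w * z i j)) = (\<Sum>p\<in>{1..N}. b p * w ^ p)"
        by (intro sum.cong refl) (auto simp: pq_scale b_def)
      also have "\<dots> = (\<Sum>p<Suc N. b p * w ^ p)" by (rule head_sum[symmetric]) (simp add: b_def)
      finally show ?thesis .
    qed
    then have "(\<lambda>N. \<Sum>p<Suc N. b p * w ^ p) \<longlonglongrightarrow> s" using s(1) by simp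
    then have "(\<lambda>p. b p * w ^ p) sums s" unfolding sums_def by (rule LIMSEQ_imp_Suc)
    then show ?thesis using s(2) by blast
  qed
  define \<rho>' where "\<rho>' = (1 + \<rho>) / 2"
  have r': "\<rho> < \<rho>'" "\<rho>' < 1" using r by (auto simp: \<rho>'_def)
  obtain s' where "(\<lambda>p. b p * (of_real \<rho>') ^ p) sums s'" using sums[of "of_real \<rho>'"] r r' by auto
  then have "summable (\<lambda>p. b p * (of_real \<rho>') ^ p)" by (rule sums_summable)
  then have sc0: "summable (\<lambda>p. norm (b p * (of_real \<rho>) ^ p))"
    by (rule powser_insidea) (use r r' in simp)
  define c where "c p = b p * (of_real \<rho>) ^ p" for p
  have sc: "summable (\<lambda>p. norm (c p))" using sc0 by (simp add: c_def)
  have cq: "cmod (c q) = cmod (pq k n a q z) * \<rho> ^ q"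
    using q r by (simp add: c_def b_def norm_mult norm_power)
  show "cmod (pq k n a q z) * \<rho> ^ q \<le> a0"
    unfolding cq[symmetric]
  proof (rule field_le_epsilon)
    fix \<epsilon> :: real assume e: "0 < \<epsilon>"
    obtain N0 where N0: "\<forall>n\<ge>N0. norm (\<Sum>i. norm (c (i + n))) < \<epsilon> / 2"
      using suminf_exist_split[OF _ sc, of "\<epsilon>/2"] e by auto
    define L where "L = N0 + 3"
    define P where "P = q * (L - 1) - 1"
    have qL: "q * (L - 1) \<ge> 2 * q" unfolding L_def by simp
    have qP: "q \<le> P" unfolding P_def using qL q by linarith
    have PL: "P < q * (L - 1)" unfolding P_def using qL q by linarith
    have NP: "N0 \<le> Suc P"
    proof -
      have "L - 1 \<le> q * (L - 1)" using q by simp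
      then show ?thesis unfolding P_def L_def by simp
    qed
    define \<tau> where "\<tau> = (\<Sum>i. norm (c (i + Suc P)))"
    have st: "summable (\<lambda>i. norm (c (i + Suc P)))" by (rule summable_ignore_initial_segment[OF sc])
    have tau0: "0 \<le> \<tau>" unfolding \<tau>_def by (intro suminf_nonneg[OF st]) simp
    have tau: "\<tau> < \<epsilon> / 2" using N0 NP tau0 unfolding \<tau>_def by auto
    have pos': "0 \<le> (a0 + 2 * \<tau>) + 2 * Re (\<Sum>p\<in>{1..P}. c p * cis (real p * \<theta>))" for \<theta> :: real
    proof -
      have "cmod (of_real \<rho> * cis \<theta>) < 1" using r by (simp add: norm_mult)
      then obtain s where s: "(\<lambda>p. b p * (of_real \<rho> * cis \<theta>) ^ p) sums s" "0 \<le> a0 + 2 * Re s"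
        using sums by blast
      define f where "f p = c p * cis (real p * \<theta>)" for p
      have "(\<lambda>p. b p * (of_real \<rho> * cis \<theta>) ^ p) = f"
        unfolding cis_pow by (auto simp: f_def c_def mult_ac)
      then have fs: "f sums s" using s(1) by simp
      have nf: "norm (f p) = norm (c p)" for p by (simp add: f_def norm_mult)
      have split: "s = (\<Sum>i. f (i + Suc P)) + (\<Sum>p<Suc P. f p)"
        using suminf_split_initial_segment[OF sums_summable[OF fs], of "Suc P"] fs
        by (simp add: sums_iff)
      have head: "(\<Sum>p<Suc P. f p) = (\<Sum>p\<in>{1..P}. f p)" by (rule head_sum) (simp add: f_def c_def b_def)
      have "norm (\<Sum>i. f (i + Suc P)) \<le> (\<Sum>i. norm (f (i + Suc P)))"
        by (rule summable_norm) (simp only: nf st)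
      also have "\<dots> = \<tau>" by (simp add: nf \<tau>_def)
      finally have "Re (\<Sum>i. f (i + Suc P)) \<le> \<tau>"
        using abs_Re_le_cmod[of "\<Sum>i. f (i + Suc P)"] by linarith
      moreover have "Re s = Re (\<Sum>i. f (i + Suc P)) + Re (\<Sum>p\<in>{1..P}. f p)"
        unfolding split head by simp
      ultimately have "0 \<le> a0 + 2 * \<tau> + 2 * Re (\<Sum>p\<in>{1..P}. f p)" using s(2) by linarith
      then show ?thesis by (simp only: f_def)
    qed
    have "cmod (c q) \<le> (a0 + 2 * \<tau>) * cos (pi / L)" by (rule ESq[OF q qP PL pos'])
    moreover have "0 < cos (pi / L)" by (rule cos_pi_L_pos) (simp add: L_def)
    moreover have "cos (pi / L) \<le> 1" by simp
    ultimately have "cmod (c q) \<le> a0 + 2 * \<tau>"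
    proof -
      assume h: "cmod (c q) \<le> (a0 + 2 * \<tau>) * cos (pi / L)" "0 < cos (pi / L)" "cos (pi / L) \<le> 1"
      have "0 \<le> (a0 + 2 * \<tau>) * cos (pi / L)" using h(1) norm_ge_zero order_trans by blast
      then have A: "0 \<le> a0 + 2 * \<tau>" using h(2) by (simp add: zero_le_mult_iff)
      have "(a0 + 2 * \<tau>) * cos (pi / L) \<le> (a0 + 2 * \<tau>) * 1" by (rule mult_left_mono[OF h(3) A])
      then show ?thesis using h(1) by simp
    qed
    then show "cmod (c q) \<le> a0 + \<epsilon>" using tau by linarith
  qed
qed

lemma sig_le_cpolyball: "z \<in> cpolyball k n \<Longrightarrow> i < k \<Longrightarrow> sig n z i \<le> 1"
  by (simp add: cpolyball_def sig_def)

lemma sig_scaled_lt: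
  assumes "z \<in> cpolyball k n" "cmod w < 1"
  shows "\<forall>i<k. sig n (\<lambda>i j. w * z i j) i < 1"
proof (intro allI impI)
  fix i assume i: "i < k"
  have "(cmod w)\<^sup>2 * sig n z i \<le> (cmod w)\<^sup>2 * 1"
    using sig_le_cpolyball[OF assms(1) i] by (intro mult_left_mono) auto
  also have "\<dots> < 1" using assms(2) by (simp add: power_less_one_iff abs_square_less_1)
  finally show "sig n (\<lambda>i j. w * z i j) i < 1" by (simp add: sig_scale)
qed

lemma pointwise:
  assumes conv: "\<forall>X. in_polyball k n X \<longrightarrow> (\<exists>S. bop S \<and> series_limit k n a m X S)"
    and pos: "\<forall>X S. in_polyball k n X \<and> bop S \<and> series_limit k n a m X S
                 \<longrightarrow> positive_op (g_op a0 S)"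
    and z: "z \<in> cpolyball k n" and q: "1 \<le> q" "enat q \<le> m"
  shows "cmod (pq k n a q z) \<le> a0 * cos_bound m q"
proof (cases m)
  case (enat M)
  have qM: "q \<le> M" using q enat by simp
  have "cmod (pq k n a q z) \<le> a0 * cos (pi / (real (M div q) + 2))"
  proof (rule analytic_fin[OF _ q(1) qM])
    fix w :: complex assume w: "cmod w < 1"
    show "0 \<le> a0 + 2 * Re (\<Sum>p\<in>{1..M}. pq k n a p (\<lambda>i j. w * z i j))"
      by (rule scalar_pos_fin[OF conv pos enat sig_scaled_lt[OF z w]])
  qed
  then show ?thesis by (simp add: cos_bound_def enat)
next
  case infinity
  have "cmod (pq k n a q z) \<le> a0"
  proof (rule analytic_inf[OF _ q(1)])
    fix w :: complex assume w: "cmod w < 1"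
    show "\<exists>s. (\<lambda>N. \<Sum>q\<in>{1..N}. pq k n a q (\<lambda>i j. w * z i j)) \<longlonglongrightarrow> s \<and> 0 \<le> a0 + 2 * Re s"
      by (rule scalar_pos_inf[OF conv pos infinity sig_scaled_lt[OF z w]])
  qed
  then show ?thesis by (simp add: cos_bound_def infinity)
qed

lemma zero_cpolyball: "(\<lambda>i j. 0) \<in> cpolyball k n" by (simp add: cpolyball_def)

lemma part1:
  assumes conv: "\<forall>X. in_polyball k n X \<longrightarrow> (\<exists>S. bop S \<and> series_limit k n a m X S)"
    and pos: "\<forall>X S. in_polyball k n X \<and> bop S \<and> series_limit k n a m X S
                 \<longrightarrow> positive_op (g_op a0 S)"
  shows "\<forall>q. 1 \<le> q \<and> enat q \<le> m \<longrightarrow>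
            (SUP z\<in>cpolyball k n. cmod (\<Sum>\<alpha>\<in>Gamma k n q. a \<alpha> * lam_multi k z \<alpha>))
              \<le> a0 * cos_bound m q"
proof (intro allI impI)
  fix q assume q: "1 \<le> q \<and> enat q \<le> m"
  show "(SUP z\<in>cpolyball k n. cmod (\<Sum>\<alpha>\<in>Gamma k n q. a \<alpha> * lam_multi k z \<alpha>)) \<le> a0 * cos_bound m q"
  proof (rule cSUP_least)
    show "cpolyball k n \<noteq> {}" using zero_cpolyball by blast
  next
    fix z assume "z \<in> cpolyball k n"
    then show "cmod (\<Sum>\<alpha>\<in>Gamma k n q. a \<alpha> * lam_multi k z \<alpha>) \<le> a0 * cos_bound m q"
      using pointwise[OF conv pos _ conjunct1[OF q] conjunct2[OF q]] by (simp add: pq_def)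
  qed
qed

definition ee :: "nat \<Rightarrow> nat \<Rightarrow> nat \<Rightarrow> nat list" where
  "ee i j = (\<lambda>i'. if i' = i then [j] else [])"

lemma ee_Gamma: "i < k \<Longrightarrow> j < n i \<Longrightarrow> ee i j \<in> Gamma k n 1"
proof -
  assume ij: "i < k" "j < n i"
  have "(\<Sum>ia<k. length (if ia = i then [j] else [])) = (\<Sum>ia<k. if ia = i then 1 else 0)"
    by (intro sum.cong) auto
  also have "\<dots> = 1" using ij by simp
  finally show ?thesis using ij unfolding Gamma_def ee_def by auto
qed

lemma Gamma1_sub: "\<alpha> \<in> Gamma k n 1 \<Longrightarrow> \<exists>i j. i < k \<and> j < n i \<and> \<alpha> = ee i j"
proof -
  assume a: "\<alpha> \<in> Gamma k n 1"
  then have out: "\<forall>i. k \<le> i \<longrightarrow> \<alpha> i = []" and letters: "\<forall>i<k. set (\<alpha> i) \<subseteq> {..<n i}"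
    and len: "(\<Sum>i<k. length (\<alpha> i)) = 1" by (auto simp: Gamma_def)
  obtain i0 where i0: "i0 < k" "\<alpha> i0 \<noteq> []"
  proof (rule ccontr)
    assume "\<not> thesis"
    then have "\<forall>i<k. \<alpha> i = []" using that by blast
    then have "(\<Sum>i<k. length (\<alpha> i)) = 0" by simp
    then show False using len by simp
  qed
  have split: "(\<Sum>i<k. length (\<alpha> i)) = length (\<alpha> i0) + (\<Sum>i\<in>{..<k}-{i0}. length (\<alpha> i))"
    using i0 by (simp add: sum.remove)
  have l1: "length (\<alpha> i0) = 1" and rest: "(\<Sum>i\<in>{..<k}-{i0}. length (\<alpha> i)) = 0"
    using split len i0(2) by (cases "\<alpha> i0"; simp)+
  obtain j where j: "\<alpha> i0 = [j]" using l1 by (cases "\<alpha> i0") auto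
  have jn: "j < n i0" using letters i0 j by auto
  have "\<alpha> i = []" if "i \<noteq> i0" for i
  proof (cases "i < k")
    case True
    then show ?thesis using rest that by (simp add: sum_eq_0_iff)
  next
    case False
    then show ?thesis using out by simp
  qed
  then have "\<alpha> = ee i0 j" using j by (auto simp: ee_def)
  then show ?thesis using i0 jn by blast
qed

lemma Gamma1_eq: "Gamma k n 1 = (\<lambda>(i, j). ee i j) ` (SIGMA i:{..<k}. {..<n i})"
  using ee_Gamma Gamma1_sub by fastforce

lemma ee_inj: "inj_on (\<lambda>(i, j). ee i j) X"
  unfolding inj_on_def ee_def
  by (auto dest!: fun_cong split: if_splits)

lemma lam_ee: "i < k \<Longrightarrow> lam_multi k z (ee i j) = z i j"
  unfolding lam_multi_def ee_def by (simp add: prod.If_cases Int_absorb1 if_distrib[of "\<lambda>x. prod_list (map _ x)"])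

lemma pq1: "pq k n a 1 z = (\<Sum>i<k. \<Sum>j<n i. a (ee i j) * z i j)"
  unfolding pq_def Gamma1_eq sum.reindex[OF ee_inj]
  by (subst sum.Sigma) (auto intro!: sum.cong simp: lam_ee)

lemma wirt:
  assumes D: "(s has_field_derivative D) (at 0)"
  shows "wirtinger (\<lambda>t. cnj (s t) + of_real a0 + s t) 0 = D"
proof -
  have c1: "((\<lambda>x::real. 0 + of_real x :: complex) has_vector_derivative 1) (at 0)"
    by (auto intro!: derivative_eq_intros)
  have D1: "(s has_field_derivative D) (at (0 + of_real (0::real)))" using D by simp
  have s1: "((\<lambda>x::real. s (0 + of_real x)) has_vector_derivative D) (at 0)"
    using field_vector_diff_chain_at[OF c1 D1] by (simp add: o_def)
  have c2: "((\<lambda>x::real. 0 + \<i> * of_real x :: complex) has_vector_derivative \<i>) (at 0)"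
    by (auto intro!: derivative_eq_intros)
  have D2: "(s has_field_derivative D) (at (0 + \<i> * of_real (0::real)))" using D by simp
  have s2: "((\<lambda>x::real. s (0 + \<i> * of_real x)) has_vector_derivative \<i> * D) (at 0)"
    using field_vector_diff_chain_at[OF c2 D2] by (simp add: o_def)
  have v1: "((\<lambda>x::real. cnj (s (0 + of_real x)) + of_real a0 + s (0 + of_real x)) has_vector_derivative
      (cnj D + 0 + D)) (at 0)"
    by (intro has_vector_derivative_add has_vector_derivative_cnj s1 has_vector_derivative_const)
  have v2: "((\<lambda>x::real. cnj (s (0 + \<i> * of_real x)) + of_real a0 + s (0 + \<i> * of_real x)) has_vector_derivative
      (cnj (\<i> * D) + 0 + \<i> * D)) (at 0)"
    by (intro has_vector_derivative_add has_vector_derivative_cnj s2 has_vector_derivative_const)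
  show ?thesis unfolding wirtinger_def
    using vector_derivative_at[OF v1] vector_derivative_at[OF v2]
    by (simp add: algebra_simps complex_eq_iff)
qed

definition pt :: "nat \<Rightarrow> nat \<Rightarrow> complex \<Rightarrow> nat \<Rightarrow> nat \<Rightarrow> complex" where
  "pt i j t = (\<lambda>i' j'. if i' = i \<and> j' = j then t else 0)"

lemma pt_scale: "pt i j t = (\<lambda>i' j'. t * pt i j 1 i' j')"
  by (auto simp: pt_def fun_eq_iff)

lemma pq_pt: "pq k n a p (pt i j t) = t ^ p * pq k n a p (pt i j 1)"
  by (subst pt_scale) (rule pq_scale)

lemma pt1_cpoly: "pt i j 1 \<in> cpolyball k n"
  unfolding cpolyball_def
proof (intro CollectI allI impI)
  fix i' assume "i' < k"
  have "(\<Sum>j'<n i'. (cmod (pt i j 1 i' j'))\<^sup>2) = (\<Sum>j'<n i'. if i' = i \<and> j' = j then 1 else 0)"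
    by (intro sum.cong) (auto simp: pt_def)
  also have "\<dots> \<le> 1" by (cases "i' = i") auto
  finally show "(\<Sum>j'<n i'. (cmod (pt i j 1 i' j'))\<^sup>2) \<le> 1" .
qed

lemma beta1:
  assumes "i < k" "j < n i"
  shows "pq k n a 1 (pt i j 1) = a (ee i j)"
proof -
  have inner: "(\<Sum>j'<n i'. a (ee i' j') * pt i j 1 i' j') = (if i' = i then a (ee i j) else 0)" for i'
  proof -
    have "(\<Sum>j'<n i'. a (ee i' j') * pt i j 1 i' j') = (\<Sum>j'<n i'. if i' = i \<and> j' = j then a (ee i j) else 0)"
      by (intro sum.cong) (auto simp: pt_def)
    also have "\<dots> = (if i' = i then a (ee i j) else 0)" using assms(2) by (cases "i' = i") auto
    finally show ?thesis .
  qed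
  show ?thesis unfolding pq1 inner using assms(1) by simp
qed

lemma g_scalar_pt:
  "g_scalar k n a a0 m (pt i j t) =
     (let s = (case m of enat M \<Rightarrow> (\<Sum>q\<in>{1..M}. pq k n a q (pt i j t))
        | \<infinity> \<Rightarrow> (\<Sum>q. pq k n a (Suc q) (pt i j t))) in cnj s + of_real a0 + s)"
  unfolding g_scalar_def pq_def by simp

lemma sfun_deriv:
  assumes conv: "\<forall>X. in_polyball k n X \<longrightarrow> (\<exists>S. bop S \<and> series_limit k n a m X S)"
    and pos: "\<forall>X S. in_polyball k n X \<and> bop S \<and> series_limit k n a m X S
                 \<longrightarrow> positive_op (g_op a0 S)"
    and ij: "i < k" "j < n i"
  shows "((\<lambda>t. case m of enat M \<Rightarrow> (\<Sum>q\<in>{1..M}. pq k n a q (pt i j t))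
        | \<infinity> \<Rightarrow> (\<Sum>q. pq k n a (Suc q) (pt i j t))) has_field_derivative
         (if m = enat 0 then 0 else a (ee i j))) (at 0)"
proof -
  define sf where "sf t = (case m of enat M \<Rightarrow> (\<Sum>q\<in>{1..M}. pq k n a q (pt i j t))
        | \<infinity> \<Rightarrow> (\<Sum>q. pq k n a (Suc q) (pt i j t)))" for t
  define \<beta> where "\<beta> p = pq k n a p (pt i j 1)" for p
  define c where "c p = (case m of enat M \<Rightarrow> (if 1 \<le> p \<and> p \<le> M then \<beta> p else 0)
        | \<infinity> \<Rightarrow> (if p = 0 then 0 else \<beta> p))" for p
  have rep: "(\<lambda>p. c p * t ^ p) sums sf t" if t: "cmod t < 1" for t
  proof (cases m)
    case (enat M)
    have "(\<lambda>p. c p * t ^ p) = (\<lambda>p. if p \<in> {1..M} then \<beta> p * t ^ p else 0)"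
      by (auto simp: c_def enat)
    moreover have "sf t = (\<Sum>p\<in>{1..M}. \<beta> p * t ^ p)"
      by (simp add: sf_def enat \<beta>_def pq_pt[of _ _ _ _ i j t] mult_ac)
    ultimately show ?thesis using sums_If_finite_set[of "{1..M}" "\<lambda>p. \<beta> p * t ^ p"] by simp
  next
    case infinity
    have sl: "\<forall>i'<k. sig n (\<lambda>i' j'. t * pt i j 1 i' j') i' < 1"
      by (rule sig_scaled_lt[OF pt1_cpoly t])
    obtain s where s: "(\<lambda>N. \<Sum>q\<in>{1..N}. pq k n a q (\<lambda>i' j'. t * pt i j 1 i' j')) \<longlonglongrightarrow> s"
      using scalar_pos_inf[OF conv pos infinity sl] by blast
    have "(\<Sum>q\<in>{1..N}. pq k n a q (\<lambda>i' j'. t * pt i j 1 i' j')) = (\<Sum>p<Suc N. c p * t ^ p)" for N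
    proof -
      have "(\<Sum>q\<in>{1..N}. pq k n a q (\<lambda>i' j'. t * pt i j 1 i' j')) = (\<Sum>p\<in>{1..N}. c p * t ^ p)"
        by (intro sum.cong refl) (auto simp: pq_scale c_def infinity \<beta>_def)
      also have "\<dots> = (\<Sum>p<Suc N. c p * t ^ p)" by (rule head_sum[symmetric]) (simp add: c_def infinity)
      finally show ?thesis .
    qed
    then have "(\<lambda>N. \<Sum>p<Suc N. c p * t ^ p) \<longlonglongrightarrow> s" using s by simp
    then have cs: "(\<lambda>p. c p * t ^ p) sums s" unfolding sums_def by (rule LIMSEQ_imp_Suc)
    have "sf t = (\<Sum>q. c (Suc q) * t ^ Suc q)"
      by (simp add: sf_def infinity c_def \<beta>_def pq_pt[of _ _ _ _ i j t] mult_ac)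
    also have "\<dots> = s - c 0 * t ^ 0" using suminf_split_head[OF sums_summable[OF cs]] cs
      by (simp add: sums_iff)
    also have "\<dots> = s" by (simp add: c_def infinity)
    finally show ?thesis using cs by simp
  qed
  have "((\<lambda>t. \<Sum>p. c p * t ^ p) has_field_derivative (\<Sum>p. diffs c p * 0 ^ p)) (at 0)"
    by (rule termdiffs_strong'[of 1]) (auto intro: sums_summable[OF rep])
  then have d: "((\<lambda>t. \<Sum>p. c p * t ^ p) has_field_derivative c 1) (at 0)"
    by (simp add: diffs_def)
  have d2: "(sf has_field_derivative c 1) (at 0)"
  proof (rule has_field_derivative_transform_within_open[OF d, of "ball 0 1"])
    fix x :: complex assume "x \<in> ball 0 1"
    then have "cmod x < 1" by simp
    then show "(\<Sum>p. c p * x ^ p) = sf x" using rep by (simp add: sums_iff)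
  qed auto
  have b1: "pq k n a (Suc 0) (pt i j 1) = a (ee i j)" using beta1[of i k j n a, OF ij] by simp
  have "c 1 = (if m = enat 0 then 0 else a (ee i j))"
    using b1 by (cases m) (auto simp: c_def \<beta>_def enat_0_iff zero_enat_def)
  then show ?thesis using d2 unfolding sf_def by simp
qed

lemma mcnj: "x * cnj x = (complex_of_real (cmod x))\<^sup>2"
  by (metis complex_norm_square of_real_power)

lemma pderiv_val:
  assumes conv: "\<forall>X. in_polyball k n X \<longrightarrow> (\<exists>S. bop S \<and> series_limit k n a m X S)"
    and pos: "\<forall>X S. in_polyball k n X \<and> bop S \<and> series_limit k n a m X S
                 \<longrightarrow> positive_op (g_op a0 S)"
    and ij: "i < k" "j < n i"
  shows "pderiv_at0 (g_scalar k n a a0 m) i j = (if m = enat 0 then 0 else a (ee i j))"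
proof -
  define sf where "sf t = (case m of enat M \<Rightarrow> (\<Sum>q\<in>{1..M}. pq k n a q (pt i j t))
        | \<infinity> \<Rightarrow> (\<Sum>q. pq k n a (Suc q) (pt i j t)))" for t
  have eq: "(\<lambda>i' j'. if i' = i \<and> j' = j then t else 0) = pt i j t" for t by (simp add: pt_def)
  have g: "g_scalar k n a a0 m (pt i j t) = cnj (sf t) + of_real a0 + sf t" for t
    unfolding g_scalar_pt sf_def Let_def ..
  have D: "(sf has_field_derivative (if m = enat 0 then 0 else a (ee i j))) (at 0)"
    unfolding sf_def by (rule sfun_deriv[OF conv pos ij])
  show ?thesis unfolding pderiv_at0_def eq g by (rule wirt[OF D])
qed

lemma part2:
  assumes conv: "\<forall>X. in_polyball k n X \<longrightarrow> (\<exists>S. bop S \<and> series_limit k n a m X S)"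
    and pos: "\<forall>X S. in_polyball k n X \<and> bop S \<and> series_limit k n a m X S
                 \<longrightarrow> positive_op (g_op a0 S)"
  shows "(\<Sum>i<k. sqrt (\<Sum>j<n i. (cmod (pderiv_at0 (g_scalar k n a a0 m) i j))\<^sup>2))
              \<le> a0 * cos_bound m 1"
proof (cases "m = enat 0")
  case True
  have "(\<Sum>i<k. sqrt (\<Sum>j<n i. (cmod (pderiv_at0 (g_scalar k n a a0 m) i j))\<^sup>2)) = 0"
  proof (intro sum.neutral ballI)
    fix i assume i: "i \<in> {..<k}"
    have "(\<Sum>j<n i. (cmod (pderiv_at0 (g_scalar k n a a0 m) i j))\<^sup>2) = 0"
      by (intro sum.neutral ballI) (use i in \<open>simp add: pderiv_val[OF conv pos], simp add: True\<close>)
    then show "sqrt (\<Sum>j<n i. (cmod (pderiv_at0 (g_scalar k n a a0 m) i j))\<^sup>2) = 0" by simp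
  qed
  moreover have "cos_bound m 1 = 0" by (simp add: True cos_bound_def)
  ultimately show ?thesis by simp
next
  case False
  have m1: "enat 1 \<le> m" using False by (cases m) (auto simp: enat_0_iff)
  define N where "N i = sqrt (\<Sum>j<n i. (cmod (a (ee i j)))\<^sup>2)" for i
  have N0: "0 \<le> N i" for i by (simp add: N_def sum_nonneg)
  have N2: "(N i)\<^sup>2 = (\<Sum>j<n i. (cmod (a (ee i j)))\<^sup>2)" for i by (simp add: N_def sum_nonneg)
  have lhs: "(\<Sum>i<k. sqrt (\<Sum>j<n i. (cmod (pderiv_at0 (g_scalar k n a a0 m) i j))\<^sup>2)) = (\<Sum>i<k. N i)"
    by (intro sum.cong refl) (simp add: N_def pderiv_val[OF conv pos] False)
  define z where "z i j = (if N i = 0 then 0 else cnj (a (ee i j)) / of_real (N i))" for i j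
  have zc: "z \<in> cpolyball k n"
    unfolding cpolyball_def
  proof (intro CollectI allI impI)
    fix i assume "i < k"
    show "(\<Sum>j<n i. (cmod (z i j))\<^sup>2) \<le> 1"
    proof (cases "N i = 0")
      case True then show ?thesis by (simp add: z_def)
    next
      case False
      have "(\<Sum>j<n i. (cmod (z i j))\<^sup>2) = (\<Sum>j<n i. (cmod (a (ee i j)))\<^sup>2) / (N i)\<^sup>2"
        using False N0[of i] by (simp add: z_def norm_divide power_divide sum_divide_distrib)
      also have "\<dots> = 1" using False by (simp add: N2[symmetric])
      finally show ?thesis by simp
    qed
  qed
  have pz: "pq k n a 1 z = of_real (\<Sum>i<k. N i)"
  proof -
    have "(\<Sum>j<n i. a (ee i j) * z i j) = of_real (N i)" for i
    proof (cases "N i = 0")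
      case True then show ?thesis by (simp add: z_def)
    next
      case False
      have "(\<Sum>j<n i. a (ee i j) * z i j) = (\<Sum>j<n i. of_real ((cmod (a (ee i j)))\<^sup>2)) / of_real (N i)"
        by (simp add: z_def False sum_divide_distrib mcnj)
      also have "\<dots> = of_real ((N i)\<^sup>2 / N i)" by (simp add: N2 of_real_sum[symmetric])
      also have "\<dots> = of_real (N i)" using False by (simp add: power2_eq_square)
      finally show ?thesis .
    qed
    then show ?thesis unfolding pq1 by simp
  qed
  have "cmod (pq k n a 1 z) \<le> a0 * cos_bound m 1"
    by (rule pointwise[OF conv pos zc _ m1]) simp
  moreover have "cmod (pq k n a 1 z) = (\<Sum>i<k. N i)"
    unfolding pz norm_of_real using N0 by (simp add: sum_nonneg abs_of_nonneg)
  ultimately show ?thesis unfolding lhs by simp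
qed

theorem corollary6p2:
  fixes k :: nat and n :: "nat \<Rightarrow> nat" and m :: enat and a0 :: real
    and a :: "(nat \<Rightarrow> nat list) \<Rightarrow> complex"
  assumes "1 \<le> k" and "\<forall>i<k. 1 \<le> n i"
    and conv: "\<forall>X. in_polyball k n X \<longrightarrow> (\<exists>S. bop S \<and> series_limit k n a m X S)"
    and pos: "\<forall>X S. in_polyball k n X \<and> bop S \<and> series_limit k n a m X S
                 \<longrightarrow> positive_op (g_op a0 S)"
  shows "(\<forall>q. 1 \<le> q \<and> enat q \<le> m \<longrightarrow>
            (SUP z\<in>cpolyball k n. cmod (\<Sum>\<alpha>\<in>Gamma k n q. a \<alpha> * lam_multi k z \<alpha>))
              \<le> a0 * cos_bound m q)
       \<and> (\<Sum>i<k. sqrt (\<Sum>j<n i. (cmod (pderiv_at0 (g_scalar k n a a0 m) i j))\<^sup>2))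
              \<le> a0 * cos_bound m 1"
  using part1[OF conv pos] part2[OF conv pos] by blast
end
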